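(* Let $\mathcal E$ be a nest on a complex Banach space $X$ and let $E\in\mathcal E$. Then the weak*-closure in $X^*$ of $\operatorname{span}\{N^\perp: N\in\mathcal E,\ N_+\supsetneq E\}$ equals $E^\perp$.
   Context: A nest $\mathcal E$ on $X$ is a family of closed linear subspaces of $X$, totally ordered by inclusion, containing $\{0\}$ and $X$, and closed under arbitrary meets $\wedge$ (intersections) and joins $\vee$ (norm-closed linear spans of unions). For $E\in\mathcal E$, $E_+=\wedge\{F\in\mathcal E: E\subsetneq F\}$ (with the empty meet equal to $X$). For $S\subseteq X$, $S^\perp=\{f\in X^*: f(s)=0\ \forall s\in S\}$. *)

theory Defs
  imports "HOL-Analysis.Analysis"
begin

text \<open>The distribution has no class of complex vector spaces, so a complex Banach
space is modelled as a real Banach space equipped with a compatible complex scalar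
multiplication (extending the real one) that is absolutely homogeneous.\<close>

class complex_banach = banach +
  fixes cscale :: "complex \<Rightarrow> 'a \<Rightarrow> 'a" (infixr \<open>*\<^sub>C\<close> 75)
  assumes cscale_add_right: "a *\<^sub>C (x + y) = a *\<^sub>C x + a *\<^sub>C y"
    and cscale_add_left: "(a + b) *\<^sub>C x = a *\<^sub>C x + b *\<^sub>C x"
    and cscale_cscale: "a *\<^sub>C (b *\<^sub>C x) = (a * b) *\<^sub>C x"
    and cscale_one: "1 *\<^sub>C x = x"
    and scaleR_cscale: "r *\<^sub>R x = complex_of_real r *\<^sub>C x"
    and norm_cscale: "norm (a *\<^sub>C x) = cmod a * norm x"

definition closed_csubspace :: "'a::complex_banach set \<Rightarrow> bool" where
  "closed_csubspace M \<longleftrightarrow> closed M \<and> 0 \<in> M \<and>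
     (\<forall>x\<in>M. \<forall>y\<in>M. x + y \<in> M) \<and> (\<forall>c. \<forall>x\<in>M. c *\<^sub>C x \<in> M)"

definition closed_cspan :: "'a::complex_banach set \<Rightarrow> 'a set" where
  "closed_cspan S = \<Inter>{M. closed_csubspace M \<and> S \<subseteq> M}"

definition nest :: "'a::complex_banach set set \<Rightarrow> bool" where
  "nest \<E> \<longleftrightarrow> (\<forall>M\<in>\<E>. closed_csubspace M) \<and>
     (\<forall>M\<in>\<E>. \<forall>N\<in>\<E>. M \<subseteq> N \<or> N \<subseteq> M) \<and>
     {0} \<in> \<E> \<and> UNIV \<in> \<E> \<and>
     (\<forall>\<F>\<subseteq>\<E>. \<Inter>\<F> \<in> \<E>) \<and>
     (\<forall>\<F>\<subseteq>\<E>. closed_cspan (\<Union>\<F>) \<in> \<E>)"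

text \<open>E_+ : meet of all strictly larger members (empty meet = X = UNIV).\<close>
definition nest_succ :: "'a::complex_banach set set \<Rightarrow> 'a set \<Rightarrow> 'a set" where
  "nest_succ \<E> E = \<Inter>{F\<in>\<E>. E \<subset> F}"

definition cdual :: "('a::complex_banach \<Rightarrow> complex) set" where
  "cdual = {f. (\<forall>x y. f (x + y) = f x + f y) \<and> (\<forall>c x. f (c *\<^sub>C x) = c * f x) \<and>
               (\<exists>K. \<forall>x. cmod (f x) \<le> K * norm x)}"

definition annih :: "'a::complex_banach set \<Rightarrow> ('a \<Rightarrow> complex) set" where
  "annih S = {f\<in>cdual. \<forall>s\<in>S. f s = 0}"

definition fspan :: "('a \<Rightarrow> complex) set \<Rightarrow> ('a \<Rightarrow> complex) set" where
  "fspan S = {f. \<exists>(n::nat) c g. (\<forall>i<n. g i \<in> S) \<and> f = (\<lambda>x. \<Sum>i<n. c i * g i x)}"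

text \<open>Weak*-closure in X^*: f lies in it iff every basic weak* neighbourhood
{g. \<forall>x\<in>F. |f x - g x| < e} (F finite, e > 0) meets S.\<close>
definition wstar_closure :: "('a::complex_banach \<Rightarrow> complex) set \<Rightarrow> ('a \<Rightarrow> complex) set" where
  "wstar_closure S = {f\<in>cdual. \<forall>F e. finite F \<and> e > 0 \<longrightarrow>
       (\<exists>g\<in>S. \<forall>x\<in>F. cmod (f x - g x) < e)}"

end

theory Submission
  imports Defs
begin


definition rgraph :: "('a::real_normed_vector \<times> real) set \<Rightarrow> bool" where
  "rgraph G \<longleftrightarrow> (0,0) \<in> G \<and>
    (\<forall>x a y b. (x,a)\<in>G \<longrightarrow> (y,b)\<in>G \<longrightarrow> (x+y,a+b)\<in>G) \<and>
    (\<forall>x a t. (x,a)\<in>G \<longrightarrow> (t *\<^sub>R x, t*a)\<in>G) \<and>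
    (\<forall>x a b. (x,a)\<in>G \<longrightarrow> (x,b)\<in>G \<longrightarrow> a=b) \<and>
    (\<forall>x a. (x,a)\<in>G \<longrightarrow> a \<le> norm x)"

lemma rgraphD:
  assumes "rgraph G"
  shows "(0,0) \<in> G" "(x,a)\<in>G \<Longrightarrow> (y,b)\<in>G \<Longrightarrow> (x+y,a+b)\<in>G"
    "(x,a)\<in>G \<Longrightarrow> (t *\<^sub>R x, t*a)\<in>G" "(x,a)\<in>G \<Longrightarrow> (x,b)\<in>G \<Longrightarrow> a=b"
    "(x,a)\<in>G \<Longrightarrow> a \<le> norm x"
  using assms unfolding rgraph_def by blast+

lemma rgraph_chain:
  assumes C: "C \<in> chains {G. rgraph G \<and> G0 \<subseteq> G}" and ne: "C \<noteq> {}"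
  shows "rgraph (\<Union>C) \<and> G0 \<subseteq> \<Union>C"
proof -
  have gr: "\<And>G. G \<in> C \<Longrightarrow> rgraph G \<and> G0 \<subseteq> G" using chainsD2[OF C] by blast
  have ch: "\<And>G H. G \<in> C \<Longrightarrow> H \<in> C \<Longrightarrow> G \<subseteq> H \<or> H \<subseteq> G" using chainsD[OF C] by blast
  obtain G1 where G1: "G1 \<in> C" using ne by blast
  have two: "\<exists>H\<in>C. p \<in> H \<and> q \<in> H" if pq: "p \<in> \<Union>C" "q \<in> \<Union>C" for p q
  proof -
    obtain A B where "A\<in>C" "B\<in>C" "p\<in>A" "q\<in>B" using pq by blast
    then show ?thesis using ch[of A B] by blast
  qed
  have grH: "\<And>H. H \<in> C \<Longrightarrow> rgraph H" using gr by blast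
  show ?thesis
    unfolding rgraph_def
  proof (intro conjI allI impI)
    show "(0,0) \<in> \<Union>C" using G1 rgraphD(1)[OF grH[OF G1]] by blast
    show "G0 \<subseteq> \<Union>C" using G1 gr[OF G1] by blast
  next
    fix x a y b assume "(x,a) \<in> \<Union>C" "(y,b) \<in> \<Union>C"
    then obtain H where "H\<in>C" "(x,a)\<in>H" "(y,b)\<in>H" using two by blast
    then show "(x+y,a+b) \<in> \<Union>C" using rgraphD(2)[OF grH] by blast
  next
    fix x a t assume "(x,a) \<in> \<Union>C"
    then obtain H where "H\<in>C" "(x,a)\<in>H" by blast
    then show "(t *\<^sub>R x, t*a) \<in> \<Union>C" using rgraphD(3)[OF grH] by blast
  next
    fix x a b assume "(x,a) \<in> \<Union>C" "(x,b) \<in> \<Union>C"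
    then obtain H where "H\<in>C" "(x,a)\<in>H" "(x,b)\<in>H" using two by blast
    then show "a = b" using rgraphD(4)[OF grH] by blast
  next
    fix x a assume "(x,a) \<in> \<Union>C"
    then obtain H where "H\<in>C" "(x,a)\<in>H" by blast
    then show "a \<le> norm x" using rgraphD(5)[OF grH] by blast
  qed
qed

lemma rgraph_extend:
  assumes G: "rgraph G" and z: "\<forall>a. (z,a) \<notin> G"
  shows "\<exists>G'. rgraph G' \<and> G \<subseteq> G' \<and> G' \<noteq> G"
proof -
  have add: "\<And>x a y b. (x,a)\<in>G \<Longrightarrow> (y,b)\<in>G \<Longrightarrow> (x+y,a+b)\<in>G"
   and scl: "\<And>x a t. (x,a)\<in>G \<Longrightarrow> (t *\<^sub>R x, t*a)\<in>G"
   and fn: "\<And>x a b. (x,a)\<in>G \<Longrightarrow> (x,b)\<in>G \<Longrightarrow> a=b"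
   and bd: "\<And>x a. (x,a)\<in>G \<Longrightarrow> a \<le> norm x"
   and zero: "(0,0) \<in> G"
    using rgraphD[OF G] by blast+
  define L where "L = {a - norm (u - z) | u a. (u,a) \<in> G}"
  have Lne: "L \<noteq> {}" using zero unfolding L_def by blast
  have key: "a - norm (u - z) \<le> norm (v + z) - b" if "(u,a)\<in>G" "(v,b)\<in>G" for u a v b
  proof -
    have "a + b \<le> norm (u + v)" using bd[OF add[OF that]] .
    also have "norm (u + v) \<le> norm (u - z) + norm (v + z)"
      using norm_triangle_ineq[of "u - z" "v + z"] by simp
    finally show ?thesis by simp
  qed
  have Lbd: "bdd_above L" unfolding L_def bdd_above_def
    using key[OF _ zero] by auto
  define c where "c = Sup L"
  have c1: "a - norm (u - z) \<le> c" if "(u,a)\<in>G" for u a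
    unfolding c_def by (rule cSup_upper[OF _ Lbd]) (use that in \<open>auto simp: L_def\<close>)
  have c2: "c \<le> norm (v + z) - b" if "(v,b)\<in>G" for v b
    unfolding c_def by (rule cSup_least[OF Lne]) (use key[OF _ that] in \<open>auto simp: L_def\<close>)
  define G' where "G' = {(x + t *\<^sub>R z, a + t * c) | x a t. (x,a) \<in> G}"
  have uniq: "t = s \<and> x = y" if "(x,a)\<in>G" "(y,b)\<in>G" "x + t *\<^sub>R z = y + s *\<^sub>R z" for x a y b t s
  proof (rule ccontr)
    assume ne: "\<not> (t = s \<and> x = y)"
    have ts: "t \<noteq> s" using ne that(3) by auto
    have "(s - t) *\<^sub>R z = x - y" using that(3) by (simp add: algebra_simps)
    hence "(1/(s-t)) *\<^sub>R ((s - t) *\<^sub>R z) = (1/(s-t)) *\<^sub>R (x - y)" by simp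
    hence "z = (1/(s-t)) *\<^sub>R (x - y)" using ts by simp
    moreover have "(x - y, a - b) \<in> G" using add[OF that(1) scl[OF that(2), of "-1"]] by simp
    ultimately have "(z, (1/(s-t)) * (a - b)) \<in> G" using scl by metis
    thus False using z by blast
  qed
  have "rgraph G'"
    unfolding rgraph_def
  proof (intro conjI allI impI)
    show "(0,0) \<in> G'" unfolding G'_def using zero by force
  next
    fix x a y b assume "(x,a) \<in> G'" "(y,b) \<in> G'"
    then obtain x1 a1 t1 x2 a2 t2 where "(x1,a1)\<in>G" "(x2,a2)\<in>G"
      "x = x1 + t1 *\<^sub>R z" "a = a1 + t1*c" "y = x2 + t2 *\<^sub>R z" "b = a2 + t2*c"
      unfolding G'_def by blast
    then show "(x+y,a+b) \<in> G'" unfolding G'_def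
      by (intro CollectI exI[of _ "x1+x2"] exI[of _ "a1+a2"] exI[of _ "t1+t2"])
         (auto simp: add algebra_simps)
  next
    fix x a t assume "(x,a) \<in> G'"
    then obtain x1 a1 t1 where "(x1,a1)\<in>G" "x = x1 + t1 *\<^sub>R z" "a = a1 + t1*c"
      unfolding G'_def by blast
    moreover have "t *\<^sub>R x = t *\<^sub>R x1 + (t*t1) *\<^sub>R z" "t*a = t*a1 + (t*t1)*c"
      using \<open>x = x1 + t1 *\<^sub>R z\<close> \<open>a = a1 + t1*c\<close> by (auto simp: algebra_simps)
    ultimately show "(t *\<^sub>R x, t*a) \<in> G'" unfolding G'_def using scl by blast
  next
    fix x a b assume "(x,a) \<in> G'" "(x,b) \<in> G'"
    then obtain x1 a1 t1 x2 a2 t2 where h: "(x1,a1)\<in>G" "(x2,a2)\<in>G"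
      "x = x1 + t1 *\<^sub>R z" "a = a1 + t1*c" "x = x2 + t2 *\<^sub>R z" "b = a2 + t2*c"
      unfolding G'_def by blast
    have "x1 + t1 *\<^sub>R z = x2 + t2 *\<^sub>R z" using h by simp
    then have "t1 = t2 \<and> x1 = x2" using uniq[OF h(1,2)] by blast
    then show "a = b" using h fn by auto
  next
    fix x a assume "(x,a) \<in> G'"
    then obtain x1 a1 t where h: "(x1,a1)\<in>G" "x = x1 + t *\<^sub>R z" "a = a1 + t*c"
      unfolding G'_def by blast
    consider "t = 0" | "t > 0" | "t < 0" by linarith
    then show "a \<le> norm x"
    proof cases
      case 1 then show ?thesis using h bd by auto
    next
      case 2
      have "((1/t) *\<^sub>R x1, (1/t)*a1) \<in> G" using scl[OF h(1)] .
      from c2[OF this] have "c \<le> norm ((1/t) *\<^sub>R x1 + z) - (1/t)*a1" .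
      hence "t * c \<le> t * norm ((1/t) *\<^sub>R x1 + z) - a1" using 2
        by (simp add: field_simps)
      also have "t * norm ((1/t) *\<^sub>R x1 + z) = norm (t *\<^sub>R ((1/t) *\<^sub>R x1 + z))"
        using 2 by simp
      also have "t *\<^sub>R ((1/t) *\<^sub>R x1 + z) = x" using 2 h(2) by (simp add: scaleR_add_right)
      finally show ?thesis using h(3) by simp
    next
      case 3
      have "((-1/t) *\<^sub>R x1, (-1/t)*a1) \<in> G" using scl[OF h(1)] .
      from c1[OF this] have "(-1/t)*a1 - norm ((-1/t) *\<^sub>R x1 - z) \<le> c" .
      hence "(-t) * ((-1/t)*a1 - norm ((-1/t) *\<^sub>R x1 - z)) \<le> (-t) * c"
        by (rule mult_left_mono) (use 3 in auto)
      hence "(-t) * ((-1/t)*a1) - (-t) * norm ((-1/t) *\<^sub>R x1 - z) \<le> (-t) * c"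
        by (simp only: right_diff_distrib)
      moreover have "(-t) * norm ((-1/t) *\<^sub>R x1 - z) = norm ((-t) *\<^sub>R ((-1/t) *\<^sub>R x1 - z))"
        using 3 by simp
      moreover have "(-t) *\<^sub>R ((-1/t) *\<^sub>R x1 - z) = x" using 3 h(2) by (simp add: algebra_simps)
      moreover have "(-t) * ((-1/t)*a1) = a1" using 3 by simp
      ultimately show ?thesis using h(3) by (simp add: algebra_simps)
    qed
  qed
  moreover have "G \<subseteq> G'" unfolding G'_def by force
  moreover have "(z, c) \<in> G'" unfolding G'_def using zero
    by (intro CollectI exI[of _ 0] exI[of _ 0] exI[of _ 1]) auto
  ultimately show ?thesis using z by blast
qed

lemma hahn_banach_graph:
  fixes G0 :: "('a::real_normed_vector \<times> real) set"
  assumes "rgraph G0"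
  shows "\<exists>\<psi>. (\<forall>x y. \<psi> (x+y) = \<psi> x + \<psi> y) \<and> (\<forall>t x. \<psi> (t *\<^sub>R x) = t * \<psi> x) \<and>
            (\<forall>(x,a)\<in>G0. \<psi> x = a) \<and> (\<forall>x. \<psi> x \<le> norm x)"
proof -
  let ?A = "{G. rgraph G \<and> G0 \<subseteq> G}"
  have "\<forall>C\<in>chains ?A. \<exists>U\<in>?A. \<forall>X\<in>C. X \<subseteq> U"
  proof
    fix C assume C: "C \<in> chains ?A"
    show "\<exists>U\<in>?A. \<forall>X\<in>C. X \<subseteq> U"
    proof (cases "C = {}")
      case True then show ?thesis using assms by blast
    next
      case False then show ?thesis using rgraph_chain[OF C False] by blast
    qed
  qed
  from Zorn_Lemma2[OF this] obtain M where M: "M \<in> ?A" and max: "\<forall>X\<in>?A. M \<subseteq> X \<longrightarrow> X = M"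
    by blast
  have gM: "rgraph M" using M by blast
  have tot: "\<exists>a. (x,a) \<in> M" for x
  proof (rule ccontr)
    assume "\<nexists>a. (x, a) \<in> M"
    then obtain G' where "rgraph G'" "M \<subseteq> G'" "G' \<noteq> M" using rgraph_extend[OF gM] by blast
    thus False using max M by blast
  qed
  have add: "\<And>x a y b. (x,a)\<in>M \<Longrightarrow> (y,b)\<in>M \<Longrightarrow> (x+y,a+b)\<in>M"
   and scl: "\<And>x a t. (x,a)\<in>M \<Longrightarrow> (t *\<^sub>R x, t*a)\<in>M"
   and fn: "\<And>x a b. (x,a)\<in>M \<Longrightarrow> (x,b)\<in>M \<Longrightarrow> a=b"
   and bd: "\<And>x a. (x,a)\<in>M \<Longrightarrow> a \<le> norm x"
    using rgraphD[OF gM] by blast+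
  define \<psi> where "\<psi> x = (THE a. (x,a) \<in> M)" for x
  have psi: "(x, \<psi> x) \<in> M" for x
  proof -
    obtain a where a: "(x,a)\<in>M" using tot by blast
    have "(THE a. (x,a) \<in> M) = a" by (rule the_equality) (auto intro: a dest: fn[OF a])
    then show ?thesis using a unfolding \<psi>_def by simp
  qed
  have psi_eq: "\<psi> x = a" if "(x,a)\<in>M" for x a using fn[OF psi that] .
  show ?thesis
  proof (intro exI[of _ \<psi>] conjI allI)
    fix x y show "\<psi> (x+y) = \<psi> x + \<psi> y" using psi_eq[OF add[OF psi psi]] .
  next
    fix t x show "\<psi> (t *\<^sub>R x) = t * \<psi> x" using psi_eq[OF scl[OF psi]] .
  next
    show "\<forall>(x,a)\<in>G0. \<psi> x = a" using M psi_eq by blast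
  next
    fix x show "\<psi> x \<le> norm x" using bd[OF psi] .
  qed
qed



lemma cscale_zero_left[simp]: "(0::complex) *\<^sub>C (x::'a::complex_banach) = 0"
proof -
  have "0 *\<^sub>C x = 0 *\<^sub>C x + (0::complex) *\<^sub>C x" using cscale_add_left[of 0 0 x] by simp
  thus ?thesis by simp
qed

lemma cscale_zero_right[simp]: "c *\<^sub>C (0::'a::complex_banach) = 0"
proof -
  have "c *\<^sub>C (0::'a) = c *\<^sub>C 0 + c *\<^sub>C 0" using cscale_add_right[of c 0 0] by simp
  thus ?thesis by simp
qed

lemma cscale_minus_left: "(- c) *\<^sub>C (x::'a::complex_banach) = - (c *\<^sub>C x)"
proof -
  have "(- c) *\<^sub>C x + c *\<^sub>C x = 0" using cscale_add_left[of "-c" c x] by simp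
  thus ?thesis by (simp add: eq_neg_iff_add_eq_0)
qed

lemma cscale_diff_left: "(a - b) *\<^sub>C (x::'a::complex_banach) = a *\<^sub>C x - b *\<^sub>C x"
  using cscale_add_left[of a "-b" x] cscale_minus_left[of b x] by simp

lemma cscale_minus_right: "c *\<^sub>C (- x::'a::complex_banach) = - (c *\<^sub>C x)"
proof -
  have "c *\<^sub>C (- x) + c *\<^sub>C x = 0" using cscale_add_right[of c "-x" x] by simp
  thus ?thesis by (simp add: eq_neg_iff_add_eq_0)
qed

lemma cscale_diff_right: "c *\<^sub>C (x - y::'a::complex_banach) = c *\<^sub>C x - c *\<^sub>C y"
  using cscale_add_right[of c x "-y"] cscale_minus_right[of c y] by simp

definition csub :: "'a::complex_banach set \<Rightarrow> bool" where
  "csub M \<longleftrightarrow> 0 \<in> M \<and> (\<forall>x\<in>M. \<forall>y\<in>M. x + y \<in> M) \<and> (\<forall>c. \<forall>x\<in>M. c *\<^sub>C x \<in> M)"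

lemma csubD: assumes "csub M"
  shows "0 \<in> M" "x\<in>M \<Longrightarrow> y\<in>M \<Longrightarrow> x + y \<in> M" "x \<in> M \<Longrightarrow> c *\<^sub>C x \<in> M"
    "x\<in>M \<Longrightarrow> - x \<in> M" "x\<in>M \<Longrightarrow> y\<in>M \<Longrightarrow> x - y \<in> M" "x \<in> M \<Longrightarrow> r *\<^sub>R x \<in> M"
proof -
  show 0: "0 \<in> M" using assms unfolding csub_def by blast
  have a: "\<And>x y. x\<in>M \<Longrightarrow> y\<in>M \<Longrightarrow> x + y \<in> M" using assms unfolding csub_def by blast
  show "x\<in>M \<Longrightarrow> y\<in>M \<Longrightarrow> x + y \<in> M" using a by blast
  show s: "\<And>c x. x \<in> M \<Longrightarrow> c *\<^sub>C x \<in> M" using assms unfolding csub_def by blast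
  show n: "\<And>x. x\<in>M \<Longrightarrow> - x \<in> M" proof -
    fix x assume "x \<in> M"
    have "(-1) *\<^sub>C x = - x" using cscale_minus_left[of 1 x] cscale_one[of x] by simp
    thus "- x \<in> M" using s[OF \<open>x\<in>M\<close>, of "-1"] by simp
  qed
  show "x\<in>M \<Longrightarrow> y\<in>M \<Longrightarrow> x - y \<in> M" using a[of x "-y"] n[of y] by simp
  show "x \<in> M \<Longrightarrow> r *\<^sub>R x \<in> M" using s by (simp add: scaleR_cscale)
qed

lemma cdualD: assumes "f \<in> cdual"
  shows "f (x + y) = f x + f y" "f (c *\<^sub>C x) = c * f x" "\<exists>K. \<forall>x. cmod (f x) \<le> K * norm x"
  using assms unfolding cdual_def by blast+

lemma cdual_zero[simp]: "f \<in> cdual \<Longrightarrow> f 0 = 0"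
  using cdualD(2)[of f 0 0] by simp

lemma cdual_minus: "f \<in> cdual \<Longrightarrow> f (x - y) = f x - f y"
  using cdualD(1)[of f "x - y" y] by simp

lemma cdual_add: assumes "f \<in> cdual" "g \<in> cdual" shows "(\<lambda>x. f x + g x) \<in> cdual"
proof -
  obtain K1 where K1: "\<forall>x. cmod (f x) \<le> K1 * norm x" using cdualD(3)[OF assms(1)] by blast
  obtain K2 where K2: "\<forall>x. cmod (g x) \<le> K2 * norm x" using cdualD(3)[OF assms(2)] by blast
  have "cmod (f x + g x) \<le> (K1 + K2) * norm x" for x
    using norm_triangle_ineq[of "f x" "g x"] K1 K2 by (smt (verit) distrib_right)
  hence "\<exists>K. \<forall>x. cmod (f x + g x) \<le> K * norm x" by blast
  thus ?thesis using assms unfolding cdual_def by (auto simp: algebra_simps)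
qed

lemma cdual_scale: assumes "f \<in> cdual" shows "(\<lambda>x. c * f x) \<in> cdual"
proof -
  obtain K1 where K1: "\<forall>x. cmod (f x) \<le> K1 * norm x" using cdualD(3)[OF assms(1)] by blast
  have "cmod (c * f x) \<le> (cmod c * K1) * norm x" for x
    using K1 mult_left_mono[of "cmod (f x)" "K1 * norm x" "cmod c"] by (simp add: norm_mult mult.assoc)
  hence "\<exists>K. \<forall>x. cmod (c * f x) \<le> K * norm x" by blast
  thus ?thesis using assms unfolding cdual_def by (auto simp: algebra_simps)
qed

lemma cdual_diff: assumes "f \<in> cdual" "g \<in> cdual" shows "(\<lambda>x. f x - g x) \<in> cdual"
  using cdual_add[OF assms(1) cdual_scale[OF assms(2), of "-1"]] by simp

lemma cdual_0: "(\<lambda>x. 0) \<in> cdual"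
  unfolding cdual_def by (auto intro: exI[of _ 0])

lemma ker_csub: "f \<in> cdual \<Longrightarrow> csub {x. f x = 0}"
  unfolding csub_def using cdualD[of f] by auto

lemma sep:
  fixes W :: "'a::complex_banach set"
  assumes W: "csub W" "closed W" and x: "x \<notin> W"
  shows "\<exists>h\<in>cdual. (\<forall>w\<in>W. h w = 0) \<and> h x = 1"
proof -
  have "open (- W)" using W by (simp add: open_Compl)
  then obtain d where d: "d > 0" "ball x d \<subseteq> - W" using x open_contains_ball by blast
  have dw: "d \<le> norm (x - w)" if "w \<in> W" for w
    using d that by (force simp: dist_norm subset_iff)
  define G0 where "G0 = {(w + t *\<^sub>R x, t*d) | w t. w \<in> W}"
  have "rgraph G0"
    unfolding rgraph_def
  proof (intro conjI allI impI)
    show "(0,0) \<in> G0" unfolding G0_def using csubD(1)[OF W(1)]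
      by (intro CollectI exI[of _ 0] exI[of _ "0::real"]) auto
  next
    fix y a z b assume "(y,a) \<in> G0" "(z,b) \<in> G0"
    then obtain w1 t1 w2 t2 where "w1\<in>W" "w2\<in>W" "y = w1 + t1 *\<^sub>R x" "a = t1*d"
      "z = w2 + t2 *\<^sub>R x" "b = t2*d" unfolding G0_def by blast
    then show "(y+z, a+b) \<in> G0" unfolding G0_def using csubD(2)[OF W(1)]
      by (intro CollectI exI[of _ "w1+w2"] exI[of _ "t1+t2"]) (auto simp: algebra_simps)
  next
    fix y a t assume "(y,a) \<in> G0"
    then obtain w1 t1 where "w1\<in>W" "y = w1 + t1 *\<^sub>R x" "a = t1*d" unfolding G0_def by blast
    then show "(t *\<^sub>R y, t*a) \<in> G0" unfolding G0_def using csubD(6)[OF W(1)]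
      by (intro CollectI exI[of _ "t *\<^sub>R w1"] exI[of _ "t*t1"]) (auto simp: algebra_simps)
  next
    fix y a b assume "(y,a) \<in> G0" "(y,b) \<in> G0"
    then obtain w1 t1 w2 t2 where h: "w1\<in>W" "w2\<in>W" "y = w1 + t1 *\<^sub>R x" "a = t1*d"
      "y = w2 + t2 *\<^sub>R x" "b = t2*d" unfolding G0_def by blast
    have "t1 = t2"
    proof (rule ccontr)
      assume ne: "t1 \<noteq> t2"
      have "(t1 - t2) *\<^sub>R x = w2 - w1" using h by (simp add: algebra_simps)
      hence "(1/(t1-t2)) *\<^sub>R ((t1 - t2) *\<^sub>R x) = (1/(t1-t2)) *\<^sub>R (w2 - w1)" by simp
      hence "x = (1/(t1-t2)) *\<^sub>R (w2 - w1)" using ne by simp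
      hence "x \<in> W" using csubD(5,6)[OF W(1)] h by metis
      thus False using x by blast
    qed
    thus "a = b" using h by simp
  next
    fix y a assume "(y,a) \<in> G0"
    then obtain w t where h: "w\<in>W" "y = w + t *\<^sub>R x" "a = t*d" unfolding G0_def by blast
    show "a \<le> norm y"
    proof (cases "t > 0")
      case False
      hence "t*d \<le> 0" using d by (simp add: mult_nonpos_nonneg)
      then show ?thesis using h norm_ge_zero[of y] by linarith
    next
      case True
      have "- ((1/t) *\<^sub>R w) \<in> W" using csubD(4,6)[OF W(1)] h by blast
      from dw[OF this] have "d \<le> norm (x + (1/t) *\<^sub>R w)" by simp
      hence "t * d \<le> t * norm (x + (1/t) *\<^sub>R w)" using True by simp
      also have "\<dots> = norm (t *\<^sub>R (x + (1/t) *\<^sub>R w))" using True by simp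
      also have "t *\<^sub>R (x + (1/t) *\<^sub>R w) = y" using True h by (simp add: algebra_simps)
      finally show ?thesis using h by simp
    qed
  qed
  from hahn_banach_graph[OF this] obtain \<psi> where
    padd: "\<And>y z. \<psi> (y+z) = \<psi> y + \<psi> z" and pscl: "\<And>t y. \<psi> (t *\<^sub>R y) = t * \<psi> y"
    and pG: "\<forall>(y,a)\<in>G0. \<psi> y = a" and pb: "\<And>y. \<psi> y \<le> norm y" by blast
  have pW: "\<psi> w = 0" if "w \<in> W" for w
  proof -
    have "(w + 0 *\<^sub>R x, 0*d) \<in> G0" unfolding G0_def using that by blast
    thus ?thesis using pG by auto
  qed
  have px: "\<psi> x = d"
  proof -
    have "(0 + 1 *\<^sub>R x, 1*d) \<in> G0" unfolding G0_def using csubD(1)[OF W(1)] by blast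
    thus ?thesis using pG by auto
  qed
  have pabs: "\<bar>\<psi> y\<bar> \<le> norm y" for y
  proof -
    have "\<psi> (-y) = - \<psi> y" using pscl[of "-1" y] by simp
    thus ?thesis using pb[of y] pb[of "-y"] by simp
  qed
  define h0 where "h0 y = Complex (\<psi> y) (- \<psi> (\<i> *\<^sub>C y))" for y
  have h0c: "h0 \<in> cdual"
    unfolding cdual_def
  proof (intro CollectI conjI allI exI)
    fix y z :: 'a show "h0 (y + z) = h0 y + h0 z" unfolding h0_def
      by (simp add: cscale_add_right padd complex_eq_iff)
  next
    fix c and y :: 'a
    have ce: "c = complex_of_real (Re c) + complex_of_real (Im c) * \<i>" by (simp add: complex_eq_iff)
    have cy: "c *\<^sub>C y = Re c *\<^sub>R y + Im c *\<^sub>R (\<i> *\<^sub>C y)"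
      by (subst ce) (simp add: cscale_add_left cscale_cscale scaleR_cscale)
    have iy: "\<i> *\<^sub>C (\<i> *\<^sub>C y) = - y"
      using cscale_cscale[of \<i> \<i> y] cscale_minus_left[of 1 y] by (simp add: cscale_one)
    have icy: "\<i> *\<^sub>C (c *\<^sub>C y) = Re c *\<^sub>R (\<i> *\<^sub>C y) - Im c *\<^sub>R y"
      unfolding cy by (simp add: cscale_add_right scaleR_cscale cscale_cscale iy mult.commute
          cscale_minus_right cscale_minus_left)
    have m: "\<psi> (- z) = - \<psi> z" for z using pscl[of "-1" z] by simp
    have md: "\<psi> (u - z) = \<psi> u - \<psi> z" for u z using padd[of u "-z"] m[of z] by simp
    show "h0 (c *\<^sub>C y) = c * h0 y" unfolding h0_def icy unfolding cy
      by (simp add: padd pscl m md complex_eq_iff algebra_simps)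
  next
    fix y :: 'a
    have "cmod (h0 y) \<le> \<bar>\<psi> y\<bar> + \<bar>\<psi> (\<i> *\<^sub>C y)\<bar>" using cmod_le[of "h0 y"] by (simp add: h0_def)
    also have "\<dots> \<le> norm y + norm (\<i> *\<^sub>C y)" using pabs by (intro add_mono) auto
    also have "\<dots> = 2 * norm y" by (simp add: norm_cscale)
    finally show "cmod (h0 y) \<le> 2 * norm y" .
  qed
  have h0W: "h0 w = 0" if "w\<in>W" for w
    using pW[OF that] pW[OF csubD(3)[OF W(1) that, of \<i>]] by (simp add: h0_def complex_eq_iff)
  have h0x: "h0 x \<noteq> 0" using px d by (simp add: h0_def complex_eq_iff)
  define h where "h y = inverse (h0 x) * h0 y" for y
  have "h \<in> cdual" unfolding h_def by (rule cdual_scale[OF h0c])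
  moreover have "\<forall>w\<in>W. h w = 0" using h0W by (simp add: h_def)
  moreover have "h x = 1" using h0x by (simp add: h_def)
  ultimately show ?thesis by blast
qed



definition addC :: "'a::complex_banach set \<Rightarrow> 'a \<Rightarrow> 'a set" where
  "addC S y = {s + c *\<^sub>C y | s c. s \<in> S}"

lemma csub_addC: assumes "csub S" shows "csub (addC S y)"
  unfolding csub_def addC_def
proof (intro conjI ballI allI)
  show "0 \<in> {s + c *\<^sub>C y |s c. s \<in> S}" using csubD(1)[OF assms]
    by (intro CollectI exI[of _ 0] exI[of _ "0::complex"]) simp
next
  fix u v assume "u \<in> {s + c *\<^sub>C y |s c. s \<in> S}" "v \<in> {s + c *\<^sub>C y |s c. s \<in> S}"
  then obtain s1 c1 s2 c2 where "s1\<in>S" "s2\<in>S" "u = s1 + c1 *\<^sub>C y" "v = s2 + c2 *\<^sub>C y" by blast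
  moreover have "s1 + c1 *\<^sub>C y + (s2 + c2 *\<^sub>C y) = (s1 + s2) + (c1 + c2) *\<^sub>C y"
    by (simp add: cscale_add_left algebra_simps)
  ultimately show "u + v \<in> {s + c *\<^sub>C y |s c. s \<in> S}" using csubD(2)[OF assms] by blast
next
  fix d u assume "u \<in> {s + c *\<^sub>C y |s c. s \<in> S}"
  then obtain s1 c1 where "s1\<in>S" "u = s1 + c1 *\<^sub>C y" by blast
  moreover have "d *\<^sub>C (s1 + c1 *\<^sub>C y) = d *\<^sub>C s1 + (d * c1) *\<^sub>C y"
    by (simp add: cscale_add_right cscale_cscale)
  ultimately show "d *\<^sub>C u \<in> {s + c *\<^sub>C y |s c. s \<in> S}" using csubD(3)[OF assms] by blast
qed

lemma addC_sub: "csub S \<Longrightarrow> S \<subseteq> addC S y"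
  unfolding addC_def by (force intro: exI[of _ "0::complex"])

lemma y_addC: "csub S \<Longrightarrow> y \<in> addC S y"
  unfolding addC_def using csubD(1) by (force intro: exI[of _ "1::complex"] simp: cscale_one)

lemma addC_in: assumes "csub S" "y \<in> S" shows "addC S y = S"
proof
  show "addC S y \<subseteq> S" unfolding addC_def using csubD(2,3)[OF assms(1)] assms(2) by blast
  show "S \<subseteq> addC S y" using addC_sub[OF assms(1)] .
qed

lemma closed_addC:
  assumes S: "csub S" "closed S" shows "closed (addC S y)"
proof (cases "y \<in> S")
  case True then show ?thesis using addC_in[OF S(1) True] S(2) by simp
next
  case False
  obtain h where h: "h \<in> cdual" "\<forall>w\<in>S. h w = 0" "h y = 1" using sep[OF S False] by blast
  define T where "T z = z - h z *\<^sub>C y" for z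
  have eq: "addC S y = T -` S"
  proof (intro set_eqI iffI)
    fix z assume "z \<in> addC S y"
    then obtain s c where sc: "s \<in> S" "z = s + c *\<^sub>C y" unfolding addC_def by blast
    have "h z = c" using sc h cdualD(1,2)[OF h(1)] by simp
    then show "z \<in> T -` S" using sc by (simp add: T_def)
  next
    fix z assume "z \<in> T -` S"
    hence "T z \<in> S" by simp
    moreover have "z = T z + h z *\<^sub>C y" by (simp add: T_def)
    ultimately show "z \<in> addC S y" unfolding addC_def by blast
  qed
  obtain K where K: "\<forall>x. cmod (h x) \<le> K * norm x" using cdualD(3)[OF h(1)] by blast
  have bl: "bounded_linear T"
  proof (rule bounded_linear_intro[of _ "1 + \<bar>K\<bar> * norm y"])
    fix u v show "T (u + v) = T u + T v"
      by (simp add: T_def cdualD(1)[OF h(1)] cscale_add_left)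
  next
    fix r u show "T (r *\<^sub>R u) = r *\<^sub>R T u"
      by (simp add: T_def scaleR_cscale cdualD(2)[OF h(1)] cscale_diff_right cscale_cscale)
  next
    fix u
    have "norm (T u) \<le> norm u + cmod (h u) * norm y"
      unfolding T_def using norm_triangle_ineq4[of u "h u *\<^sub>C y"] by (simp add: norm_cscale)
    also have "cmod (h u) * norm y \<le> (\<bar>K\<bar> * norm u) * norm y"
      using K by (intro mult_right_mono) (auto intro: order_trans[OF _ mult_right_mono[OF abs_ge_self]])
    finally show "norm (T u) \<le> norm u * (1 + \<bar>K\<bar> * norm y)" by (simp add: algebra_simps)
  qed
  show ?thesis unfolding eq
    by (rule continuous_closed_vimage[OF S(2)]) (rule linear_continuous_at[OF bl])
qed

definition CS :: "'a::complex_banach set \<Rightarrow> 'a set \<Rightarrow> 'a set" where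
  "CS N F = \<Inter>{M. csub M \<and> N \<union> F \<subseteq> M}"

lemma csub_UNIV: "csub UNIV" unfolding csub_def by auto

lemma csub_CS: "csub (CS N F)"
  unfolding csub_def CS_def by (auto dest: csubD)

lemma CS_least: "csub M \<Longrightarrow> N \<union> F \<subseteq> M \<Longrightarrow> CS N F \<subseteq> M"
  unfolding CS_def by blast

lemma CS_sup: "N \<union> F \<subseteq> CS N F"
  unfolding CS_def by blast

lemma CS_mono: "N \<subseteq> N' \<Longrightarrow> CS N F \<subseteq> CS N' F"
  unfolding CS_def by blast

lemma CS_empty: "csub N \<Longrightarrow> CS N {} = N"
  using CS_least[of N N "{}"] CS_sup[of N "{}"] by blast

lemma CS_insert: "CS N (insert y F) = addC (CS N F) y"
proof
  have "csub (addC (CS N F) y)" by (rule csub_addC[OF csub_CS])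
  moreover have "N \<union> insert y F \<subseteq> addC (CS N F) y"
    using CS_sup[where N=N and F=F] addC_sub[OF csub_CS[where N=N and F=F], where y=y]
      y_addC[OF csub_CS[where N=N and F=F], where y=y] by blast
  ultimately show "CS N (insert y F) \<subseteq> addC (CS N F) y" by (rule CS_least)
next
  have M: "csub (CS N (insert y F))" by (rule csub_CS)
  have "N \<union> F \<subseteq> CS N (insert y F)" using CS_sup[where N=N and F="insert y F"] by blast
  hence "CS N F \<subseteq> CS N (insert y F)" by (rule CS_least[OF M])
  moreover have "y \<in> CS N (insert y F)" using CS_sup by blast
  ultimately show "addC (CS N F) y \<subseteq> CS N (insert y F)"
    unfolding addC_def using csubD(2,3)[OF M] by blast
qed

lemma closed_CS: assumes "csub N" "closed N" "finite F" shows "closed (CS N F)"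
  using assms(3)
proof (induction F rule: finite_induct)
  case empty then show ?case using CS_empty[OF assms(1)] assms(2) by simp
next
  case (insert y F) then show ?case using closed_addC[OF csub_CS] CS_insert by metis
qed



lemma chain_sep:
  assumes cs: "\<forall>N\<in>C. csub N" and ch: "\<forall>N\<in>C. \<forall>M\<in>C. N \<subseteq> M \<or> M \<subseteq> N"
    and EN: "\<forall>N\<in>C. E \<subseteq> N" and cap: "\<forall>x. x \<notin> E \<longrightarrow> (\<exists>N\<in>C. x \<notin> N)"
    and cE: "csub E" and fin: "finite F"
  shows "\<forall>x. x \<notin> CS E F \<longrightarrow> (\<exists>N\<in>C. x \<notin> CS N F)"
  using fin
proof (induction F rule: finite_induct)
  case empty
  show ?case
  proof (intro allI impI)
    fix x assume "x \<notin> CS E {}"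
    hence "x \<notin> E" using CS_empty[OF cE] by simp
    then obtain N where "N \<in> C" "x \<notin> N" using cap by blast
    then show "\<exists>N\<in>C. x \<notin> CS N {}" using CS_empty cs by auto
  qed
next
  case (insert y F)
  show ?case
  proof (intro allI impI)
    fix x assume x: "x \<notin> CS E (insert y F)"
    show "\<exists>N\<in>C. x \<notin> CS N (insert y F)"
    proof (cases "y \<in> CS E F")
      case True
      have "CS E (insert y F) = CS E F" using CS_insert addC_in[OF csub_CS True] by metis
      then obtain N where N: "N\<in>C" "x \<notin> CS N F" using insert.IH x by auto
      have "y \<in> CS N F" using True CS_mono[of E N F] EN N(1) by blast
      hence "CS N (insert y F) = CS N F" using CS_insert addC_in[OF csub_CS] by metis
      then show ?thesis using N by auto
    next
      case False
      then obtain N1 where N1: "N1 \<in> C" "y \<notin> CS N1 F" using insert.IH by blast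
      show ?thesis
      proof (rule ccontr)
        assume "\<not> ?thesis"
        hence all: "\<forall>N\<in>C. x \<in> addC (CS N F) y" using CS_insert by metis
        obtain s1 c1 where s1: "s1 \<in> CS N1 F" "x = s1 + c1 *\<^sub>C y"
          using all N1(1) unfolding addC_def by blast
        have "x - c1 *\<^sub>C y \<in> CS N F" if N: "N \<in> C" for N
        proof (cases "N1 \<subseteq> N")
          case True then show ?thesis using s1 CS_mono[of N1 N F] by auto
        next
          case False
          hence NN1: "N \<subseteq> N1" using ch N N1(1) by blast
          obtain s c where s: "s \<in> CS N F" "x = s + c *\<^sub>C y"
            using all N unfolding addC_def by blast
          have sN1: "s \<in> CS N1 F" using s(1) CS_mono[OF NN1] by blast
          have "c = c1"
          proof (rule ccontr)
            assume ne: "c \<noteq> c1"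
            have "(c - c1) *\<^sub>C y = s1 - s" using s(2) s1(2)
              by (simp add: cscale_diff_left algebra_simps)
            hence "(1/(c-c1)) *\<^sub>C ((c - c1) *\<^sub>C y) = (1/(c-c1)) *\<^sub>C (s1 - s)" by simp
            hence "y = (1/(c-c1)) *\<^sub>C (s1 - s)" using ne by (simp add: cscale_cscale cscale_one)
            moreover have "s1 - s \<in> CS N1 F" using csubD(5)[OF csub_CS s1(1) sN1] .
            ultimately have "y \<in> CS N1 F" using csubD(3)[OF csub_CS] by metis
            thus False using N1 by blast
          qed
          then show ?thesis using s by simp
        qed
        hence "x - c1 *\<^sub>C y \<in> CS E F" using insert.IH by blast
        hence "x \<in> addC (CS E F) y" unfolding addC_def
          by (intro CollectI exI[of _ "x - c1 *\<^sub>C y"] exI[of _ c1]) simp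
        thus False using x CS_insert by metis
      qed
    qed
  qed
qed

lemma main_approx:
  assumes cs: "\<forall>N\<in>C. csub N" and cl: "\<forall>N\<in>C. closed N"
    and ch: "\<forall>N\<in>C. \<forall>M\<in>C. N \<subseteq> M \<or> M \<subseteq> N"
    and EN: "\<forall>N\<in>C. E \<subseteq> N" and cap: "\<forall>x. x \<notin> E \<longrightarrow> (\<exists>N\<in>C. x \<notin> N)"
    and cE: "csub E" and ne: "C \<noteq> {}"
    and f: "f \<in> cdual" and fE: "\<forall>e\<in>E. f e = 0" and fin: "finite F"
  shows "\<exists>N\<in>C. \<exists>g\<in>cdual. (\<forall>n\<in>N. g n = 0) \<and> (\<forall>x\<in>F. g x = f x)"
  using fin
proof (induction F rule: finite_induct)
  case empty
  obtain N0 where N0: "N0 \<in> C" using ne by blast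
  have "\<exists>g\<in>cdual. (\<forall>n\<in>N0. g n = 0) \<and> (\<forall>x\<in>{}. g x = f x)"
    by (rule bexI[where x="\<lambda>x. 0"]) (simp_all add: cdual_0)
  then show ?case by (rule bexI[OF _ N0])
next
  case (insert x F)
  from insert.IH obtain N1 g1 where N1: "N1 \<in> C" "g1 \<in> cdual" "\<forall>n\<in>N1. g1 n = 0" "\<forall>x\<in>F. g1 x = f x"
    by blast
  define k where "k z = f z - g1 z" for z
  have kc: "k \<in> cdual" unfolding k_def by (rule cdual_diff[OF f N1(2)])
  show ?case
  proof (cases "k x = 0")
    case True
    hence "\<forall>z\<in>insert x F. g1 z = f z" using N1(4) by (simp add: k_def)
    then show ?thesis using N1(3) by (intro bexI[OF _ N1(1)] bexI[OF _ N1(2)]) simp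
  next
    case False
    have "E \<subseteq> N1" using EN N1(1) by blast
    hence "E \<union> F \<subseteq> {z. k z = 0}" using fE N1(3,4) by (auto simp: k_def)
    hence "CS E F \<subseteq> {z. k z = 0}" by (rule CS_least[OF ker_csub[OF kc]])
    hence "x \<notin> CS E F" using False by blast
    then obtain N where N: "N \<in> C" "x \<notin> CS N F"
      using chain_sep[OF cs ch EN cap cE insert(1)] by blast
    define N2 where "N2 = (if N \<subseteq> N1 then N else N1)"
    have N2c: "N2 \<in> C" using N(1) N1(1) unfolding N2_def by simp
    have NN1: "N \<subseteq> N1 \<or> N1 \<subseteq> N" using ch N(1) N1(1) by blast
    have N2s: "N2 \<subseteq> N" "N2 \<subseteq> N1" using NN1 unfolding N2_def by auto
    note N2 = N2c N2s
    have x2: "x \<notin> CS N2 F" using N(2) CS_mono[OF N2(2)] by blast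
    have "closed (CS N2 F)" using closed_CS[OF _ _ insert(1)] cs cl N2(1) by simp
    then obtain h where h: "h \<in> cdual" "\<forall>w\<in>CS N2 F. h w = 0" "h x = 1"
      using sep[OF csub_CS _ x2] by blast
    define g where "g z = g1 z + k x * h z" for z
    have gc: "g \<in> cdual" unfolding g_def by (rule cdual_add[OF N1(2) cdual_scale[OF h(1)]])
    have hN: "\<forall>w\<in>N2 \<union> F. h w = 0" using h(2) CS_sup[of N2 F] by blast
    have g1: "\<forall>n\<in>N2. g n = 0"
    proof
      fix n assume n: "n \<in> N2"
      hence "g1 n = 0" using N1(3) N2(3) by blast
      moreover have "h n = 0" using hN n by blast
      ultimately show "g n = 0" by (simp add: g_def)
    qed
    have g2: "\<forall>z\<in>insert x F. g z = f z"
    proof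
      fix z assume z: "z \<in> insert x F"
      show "g z = f z"
      proof (cases "z = x")
        case True then show ?thesis using h(3) by (simp add: g_def k_def)
      next
        case False
        hence "z \<in> F" using z by simp
        hence "g1 z = f z" "h z = 0" using N1(4) hN by auto
        then show ?thesis by (simp add: g_def)
      qed
    qed
    show ?thesis using g1 g2 by (intro bexI[OF _ N2(1)] bexI[OF _ gc]) simp
  qed
qed

lemma in_fspan: "g \<in> S \<Longrightarrow> g \<in> fspan S"
  unfolding fspan_def
  by (intro CollectI exI[of _ "1::nat"] exI[of _ "\<lambda>_. 1"] exI[of _ "\<lambda>_. g"]) auto

lemma nestD:
  assumes "nest \<E>"
  shows "M \<in> \<E> \<Longrightarrow> csub M" "M \<in> \<E> \<Longrightarrow> closed M"
    "M \<in> \<E> \<Longrightarrow> N \<in> \<E> \<Longrightarrow> M \<subseteq> N \<or> N \<subseteq> M" "UNIV \<in> \<E>"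
proof -
  have a: "\<forall>M\<in>\<E>. closed_csubspace M" using assms by (simp add: nest_def)
  show "M \<in> \<E> \<Longrightarrow> csub M" using a by (simp add: closed_csubspace_def csub_def)
  show "M \<in> \<E> \<Longrightarrow> closed M" using a by (simp add: closed_csubspace_def)
  show "M \<in> \<E> \<Longrightarrow> N \<in> \<E> \<Longrightarrow> M \<subseteq> N \<or> N \<subseteq> M" using assms by (simp add: nest_def)
  show "UNIV \<in> \<E>" using assms by (simp add: nest_def)
qed

lemma E_sub_N:
  assumes n: "nest \<E>" and E: "E \<in> \<E>" and N: "N \<in> \<E>" and s: "E \<subset> nest_succ \<E> N"
  shows "E \<subseteq> N"
proof (rule ccontr)
  assume "\<not> E \<subseteq> N"
  hence "N \<subset> E" using nestD(3)[OF n E N] by blast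
  hence "nest_succ \<E> N \<subseteq> E" unfolding nest_succ_def using E by blast
  thus False using s by blast
qed

theorem mainTheorem2:
  fixes \<E> :: "'a::complex_banach set set" and E :: "'a set"
  assumes "nest \<E>" and "E \<in> \<E>"
  shows "wstar_closure (fspan (\<Union>{annih N | N. N \<in> \<E> \<and> E \<subset> nest_succ \<E> N})) = annih E"
proof -
  define S where "S = \<Union>{annih N | N. N \<in> \<E> \<and> E \<subset> nest_succ \<E> N}"
  have Svan: "g s = 0" if gs: "g \<in> S" "s \<in> E" for g s
  proof -
    obtain N where N: "N \<in> \<E>" "E \<subset> nest_succ \<E> N" "g \<in> annih N" using gs(1) unfolding S_def by blast
    have "E \<subseteq> N" by (rule E_sub_N[OF assms N(1,2)])
    thus ?thesis using N(3) gs(2) unfolding annih_def by blast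
  qed
  have "wstar_closure (fspan S) \<subseteq> annih E"
  proof
    fix f assume f: "f \<in> wstar_closure (fspan S)"
    have fc: "f \<in> cdual" using f unfolding wstar_closure_def by blast
    have "f s = 0" if s: "s \<in> E" for s
    proof (rule ccontr)
      assume ne: "f s \<noteq> 0"
      have W: "\<forall>F e. finite F \<and> e > 0 \<longrightarrow> (\<exists>g\<in>fspan S. \<forall>x\<in>F. cmod (f x - g x) < e)"
        using f unfolding wstar_closure_def by blast
      have "finite {s} \<and> cmod (f s) > 0" using ne by simp
      then obtain g where g: "g \<in> fspan S" "cmod (f s - g s) < cmod (f s)"
        using W[rule_format, of "{s}" "cmod (f s)"] by blast
      have "\<exists>(n::nat) (c::nat \<Rightarrow> complex) gi. (\<forall>i<n. gi i \<in> S) \<and> g = (\<lambda>x. \<Sum>i<n. c i * gi i x)"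
        using g(1) unfolding fspan_def by simp
      then obtain n :: nat and c :: "nat \<Rightarrow> complex" and gi where gi: "\<forall>i<n. gi i \<in> S" "g = (\<lambda>x. \<Sum>i<n. c i * gi i x)"
        by blast
      have "\<forall>i\<in>{..<n}. c i * gi i s = 0" using gi(1) Svan[OF _ s] by simp
      hence "(\<Sum>i<n. c i * gi i s) = 0" by (rule sum.neutral)
      hence "g s = 0" using gi(2) by simp
      thus False using g(2) by simp
    qed
    thus "f \<in> annih E" using fc unfolding annih_def by blast
  qed
  moreover have "annih E \<subseteq> wstar_closure (fspan S)"
  proof
    fix f assume f: "f \<in> annih E"
    have fc: "f \<in> cdual" and fE: "\<forall>e\<in>E. f e = 0" using f unfolding annih_def by blast+
    have "\<exists>g\<in>fspan S. \<forall>x\<in>F. cmod (f x - g x) < e" if F: "finite F" and e: "e > 0" for F e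
    proof (cases "E \<subset> nest_succ \<E> E")
      case True
      hence "f \<in> S" using f assms(2) unfolding S_def by blast
      then show ?thesis using in_fspan e by (intro bexI[of _ f]) auto
    next
      case nsE: False
      show ?thesis
      proof (cases "E = UNIV")
        case True
        have "g \<in> fspan S" if "g = (\<lambda>x. 0)" for g
          unfolding fspan_def that by (intro CollectI exI[of _ "0::nat"]) auto
        then show ?thesis using fE True e by (intro bexI[of _ "\<lambda>x. 0"]) auto
      next
        case EU: False
        define C where "C = {N \<in> \<E>. E \<subset> N}"
        have sub: "E \<subseteq> nest_succ \<E> E" unfolding nest_succ_def by blast
        hence succ: "nest_succ \<E> E = E" using nsE by blast
        have UC: "UNIV \<in> C" using nestD(4)[OF assms(1)] EU unfolding C_def by blast
        have cap: "\<forall>x. x \<notin> E \<longrightarrow> (\<exists>N\<in>C. x \<notin> N)"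
          using succ unfolding nest_succ_def C_def by blast
        have ch: "\<forall>N\<in>C. \<forall>M\<in>C. N \<subseteq> M \<or> M \<subseteq> N" using nestD(3)[OF assms(1)] unfolding C_def by blast
        have cs: "\<forall>N\<in>C. csub N" using nestD(1)[OF assms(1)] unfolding C_def by blast
        have cl: "\<forall>N\<in>C. closed N" using nestD(2)[OF assms(1)] unfolding C_def by blast
        have EN: "\<forall>N\<in>C. E \<subseteq> N" unfolding C_def by blast
        have cE: "csub E" by (rule nestD(1)[OF assms])
        have Cne: "C \<noteq> {}" using UC by blast
        obtain N g where N: "N \<in> C" and g: "g \<in> cdual" "\<forall>n\<in>N. g n = 0" "\<forall>x\<in>F. g x = f x"
          using main_approx[OF cs cl ch EN cap cE Cne fc fE F] by blast
        have "E \<subset> nest_succ \<E> N" using N unfolding nest_succ_def C_def by blast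
        hence "g \<in> S" using N g unfolding S_def annih_def C_def by blast
        then show ?thesis using in_fspan g(3) e by (intro bexI[of _ g]) auto
      qed
    qed
    thus "f \<in> wstar_closure (fspan S)" using fc unfolding wstar_closure_def by blast
  qed
  ultimately show ?thesis unfolding S_def by blast
qed

end
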